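(* Let $\mathbf{L}\in Q^2(\mathbb{D}^2)$. An analytic function $F\colon\mathbb{D}^2\to\mathbb{C}$ has bounded $\mathbf{L}$-index in joint variables if and only if there exist $p\in\mathbb{Z}_+$ and $c\in\mathbb{R}_+$ such that for each $z\in\mathbb{D}^2$ $$\max\left\{\frac{|F^{(j_1,j_2)}(z)|}{l_1^{j_1}(z)l_2^{j_2}(z)}: j_1+j_2=p+1\right\}\le c\max\left\{\frac{|F^{(k_1,k_2)}(z)|}{l_1^{k_1}(z)l_2^{k_2}(z)}: k_1+k_2\le p\right\}.$$
   Context: $\mathbb{D}^2=\{(z_1,z_2)\in\mathbb{C}^2:|z_1|<1,|z_2|<1\}$, $\mathbb{Z}_+=\{0,1,2,\dots\}$, $\mathbb{R}_+=[0,\infty)$. A constant $\beta>1$ is fixed. $\mathbf{L}(z)=(l_1(z),l_2(z))$, where each $l_j\colon\mathbb{D}^2\to\mathbb{R}_+$ is continuous and satisfies $l_j(z_1,z_2)>\beta/(1-|z_j|)$ for all $(z_1,z_2)\in\mathbb{D}^2$, $j=1,2$. For $z^0\in\mathbb{C}^2$ and $R=(r_1,r_2)\in\mathbb{R}_+^2$: $\mathbb{D}^2[z^0,R]=\{z:|z_j-z_j^0|\le r_j,\ j=1,2\}$ and $\frac{R}{\mathbf{L}(z^0)}=\big(\frac{r_1}{l_1(z^0)},\frac{r_2}{l_2(z^0)}\big)$. $F^{(p,q)}=\frac{\partial^{p+q}F}{\partial z_1^p\partial z_2^q}$. An analytic $F\colon\mathbb{D}^2\to\mathbb{C}$ has bounded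 $\mathbf{L}$-index in joint variables if there is $n_0\in\mathbb{Z}_+$ such that for all $z\in\mathbb{D}^2$ and all $(p_1,p_2)\in\mathbb{Z}_+^2$: $\frac{|F^{(p_1,p_2)}(z)|}{p_1!p_2!\,l_1^{p_1}(z)l_2^{p_2}(z)}\le\max\{\frac{|F^{(k_1,k_2)}(z)|}{k_1!k_2!\,l_1^{k_1}(z)l_2^{k_2}(z)}:0\le k_1+k_2\le n_0\}$. $Q^2(\mathbb{D}^2)$ is the class of such $\mathbf{L}$ for which, for all $R=(r_1,r_2)\in[0,\beta]^2$ and $j=1,2$, $0<\lambda_{1,j}(R)\le\lambda_{2,j}(R)<\infty$, where $\lambda_{1,j}(R)=\inf_{z^0\in\mathbb{D}^2}\inf\{l_j(z)/l_j(z^0): z\in\mathbb{D}^2[z^0,R/\mathbf{L}(z^0)]\}$ and $\lambda_{2,j}(R)=\sup_{z^0\in\mathbb{D}^2}\sup\{l_j(z)/l_j(z^0): z\in\mathbb{D}^2[z^0,R/\mathbf{L}(z^0)]\}$. *)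

theory Defs
  imports "HOL-Analysis.Analysis"
begin

definition D2 :: "(complex \<times> complex) set" where
  "D2 = {z. cmod (fst z) < 1 \<and> cmod (snd z) < 1}"

definition polydisc :: "complex \<times> complex \<Rightarrow> real \<times> real \<Rightarrow> (complex \<times> complex) set" where
  "polydisc z0 R = {z. cmod (fst z - fst z0) \<le> fst R \<and> cmod (snd z - snd z0) \<le> snd R}"

definition analytic2_on :: "(complex \<times> complex \<Rightarrow> complex) \<Rightarrow> (complex \<times> complex) set \<Rightarrow> bool" where
  "analytic2_on F S \<longleftrightarrow> open S \<and>
     (\<forall>z\<in>S. \<exists>a b. (F has_derivative (\<lambda>h. a * fst h + b * snd h)) (at z))"

definition pd1 :: "(complex \<times> complex \<Rightarrow> complex) \<Rightarrow> complex \<times> complex \<Rightarrow> complex" where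
  "pd1 F z = deriv (\<lambda>w. F (w, snd z)) (fst z)"

definition pd2 :: "(complex \<times> complex \<Rightarrow> complex) \<Rightarrow> complex \<times> complex \<Rightarrow> complex" where
  "pd2 F z = deriv (\<lambda>w. F (fst z, w)) (snd z)"

definition pderiv2 :: "(complex \<times> complex \<Rightarrow> complex) \<Rightarrow> nat \<Rightarrow> nat \<Rightarrow> complex \<times> complex \<Rightarrow> complex" where
  "pderiv2 F p q = (pd1 ^^ p) ((pd2 ^^ q) F)"

definition bounded_L_index :: "(complex \<times> complex \<Rightarrow> real) \<Rightarrow> (complex \<times> complex \<Rightarrow> real)
    \<Rightarrow> (complex \<times> complex \<Rightarrow> complex) \<Rightarrow> bool" where
  "bounded_L_index l1 l2 F \<longleftrightarrow>
    (\<exists>n0::nat. \<forall>z\<in>D2. \<forall>p1 p2::nat.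
       cmod (pderiv2 F p1 p2 z) / (fact p1 * fact p2 * l1 z ^ p1 * l2 z ^ p2)
       \<le> Max ((\<lambda>(k1, k2). cmod (pderiv2 F k1 k2 z) / (fact k1 * fact k2 * l1 z ^ k1 * l2 z ^ k2))
                ` {(k1, k2). k1 + k2 \<le> n0}))"

text \<open>lambda_{1,j}(R) and lambda_{2,j}(R), with values in the extended reals;
  lj is the component l_j.\<close>
definition lambda1 :: "(complex \<times> complex \<Rightarrow> real) \<Rightarrow> (complex \<times> complex \<Rightarrow> real)
    \<Rightarrow> (complex \<times> complex \<Rightarrow> real) \<Rightarrow> real \<times> real \<Rightarrow> ereal" where
  "lambda1 l1 l2 lj R = (INF z0\<in>D2. INF z\<in>D2 \<inter> polydisc z0 (fst R / l1 z0, snd R / l2 z0).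
                             ereal (lj z / lj z0))"

definition lambda2 :: "(complex \<times> complex \<Rightarrow> real) \<Rightarrow> (complex \<times> complex \<Rightarrow> real)
    \<Rightarrow> (complex \<times> complex \<Rightarrow> real) \<Rightarrow> real \<times> real \<Rightarrow> ereal" where
  "lambda2 l1 l2 lj R = (SUP z0\<in>D2. SUP z\<in>D2 \<inter> polydisc z0 (fst R / l1 z0, snd R / l2 z0).
                             ereal (lj z / lj z0))"

definition Q2 :: "real \<Rightarrow> (complex \<times> complex \<Rightarrow> real) \<Rightarrow> (complex \<times> complex \<Rightarrow> real) \<Rightarrow> bool" where
  "Q2 \<beta> l1 l2 \<longleftrightarrow>
    (\<forall>r1 r2. 0 \<le> r1 \<and> r1 \<le> \<beta> \<and> 0 \<le> r2 \<and> r2 \<le> \<beta> \<longrightarrow>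
       (\<forall>lj\<in>{l1, l2}. 0 < lambda1 l1 l2 lj (r1, r2) \<and>
                       lambda1 l1 l2 lj (r1, r2) \<le> lambda2 l1 l2 lj (r1, r2) \<and>
                       lambda2 l1 l2 lj (r1, r2) < \<infinity>))"

end

theory Submission
  imports Defs "HOL-Complex_Analysis.Complex_Analysis"
begin

lemma D2_eq: "D2 = ball 0 1 \<times> ball 0 1"
  by (auto simp: D2_def)

lemma pd1_pow: "(pd1 ^^ k) H z = (deriv ^^ k) (\<lambda>u. H (u, snd z)) (fst z)"
proof (induction k arbitrary: z)
  case 0 then show ?case by simp
next
  case (Suc k)
  have "(pd1 ^^ Suc k) H z = deriv (\<lambda>w. (pd1 ^^ k) H (w, snd z)) (fst z)"
    by (simp add: pd1_def)
  also have "(\<lambda>w. (pd1 ^^ k) H (w, snd z)) = (deriv ^^ k) (\<lambda>u. H (u, snd z))"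
    using Suc by (auto simp: fun_eq_iff)
  finally show ?case by simp
qed

lemma pd2_pow: "(pd2 ^^ k) H z = (deriv ^^ k) (\<lambda>v. H (fst z, v)) (snd z)"
proof (induction k arbitrary: z)
  case 0 then show ?case by simp
next
  case (Suc k)
  have "(pd2 ^^ Suc k) H z = deriv (\<lambda>w. (pd2 ^^ k) H (fst z, w)) (snd z)"
    by (simp add: pd2_def)
  also have "(\<lambda>w. (pd2 ^^ k) H (fst z, w)) = (deriv ^^ k) (\<lambda>v. H (fst z, v))"
    using Suc by (auto simp: fun_eq_iff)
  finally show ?case by simp
qed

definition circ :: "real \<Rightarrow> real \<Rightarrow> complex" where
  "circ r t = of_real r * exp (2 * of_real pi * \<i> * of_real t)"
definition circ' :: "real \<Rightarrow> real \<Rightarrow> complex" where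
  "circ' r t = 2 * of_real pi * \<i> * of_real r * exp (2 * of_real pi * \<i> * of_real t)"

lemma norm_circ [simp]: "r \<ge> 0 \<Longrightarrow> cmod (circ r t) = r"
  by (simp add: circ_def norm_mult)

lemma continuous_circ [continuous_intros]: "continuous_on S (circ r)" "continuous_on S (circ' r)"
  unfolding circ_def circ'_def by (auto intro!: continuous_intros)

lemma contour_integral_circ:
  "contour_integral (circlepath 0 r) f = integral {0..1} (\<lambda>t. f (circ r t) * circ' r t)"
  by (simp only: contour_integral_integral vector_derivative_circlepath) (simp add: circlepath circ_def circ'_def)

lemma circ_ne: "cmod w < r \<Longrightarrow> circ r t \<noteq> w"
  by (metis norm_circ less_irrefl less_imp_le norm_ge_zero order.strict_trans1)

locale sep_holo =
  fixes F :: "complex \<times> complex \<Rightarrow> complex"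
  assumes contF: "continuous_on (ball 0 1 \<times> ball 0 1) F"
    and h1: "\<And>v. v \<in> ball 0 1 \<Longrightarrow> (\<lambda>u. F (u, v)) holomorphic_on ball 0 1"
    and h2: "\<And>u. u \<in> ball 0 1 \<Longrightarrow> (\<lambda>v. F (u, v)) holomorphic_on ball 0 1"
begin

definition Phi :: "nat \<Rightarrow> complex \<Rightarrow> complex \<Rightarrow> complex" where
  "Phi m u w = (deriv ^^ m) (\<lambda>v. F (u, v)) w"

definition T :: "nat \<Rightarrow> real \<Rightarrow> complex \<Rightarrow> complex \<Rightarrow> complex" where
  "T m r u w = integral {0..1} (\<lambda>t. F (u, circ r t) * circ' r t / (circ r t - w) ^ Suc m)"

lemma Phi_T:
  assumes r: "0 < r" "r < 1" and u: "cmod u < 1" and w: "cmod w < r"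
  shows "Phi m u w = fact m / (2 * of_real pi * \<i>) * T m r u w"
proof -
  have hol: "(\<lambda>v. F (u, v)) holomorphic_on ball 0 1" using h2 u by simp
  have "cball 0 r \<subseteq> ball (0::complex) 1" using r by auto
  then have c: "continuous_on (cball 0 r) (\<lambda>v. F (u, v))"
    using hol holomorphic_on_imp_continuous_on continuous_on_subset by blast
  have hb: "(\<lambda>v. F (u, v)) holomorphic_on ball 0 r"
    using hol holomorphic_on_subset r by auto
  have "Phi m u w = fact m / (2 * of_real pi * \<i>) * contour_integral (circlepath 0 r) (\<lambda>v. F (u, v) / (v - w) ^ Suc m)"
    unfolding Phi_def
    using Cauchy_higher_derivative_integral_circlepath(2)[OF c hb, of w m] w by simp
  also have "contour_integral (circlepath 0 r) (\<lambda>v. F (u, v) / (v - w) ^ Suc m) = T m r u w"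
    unfolding contour_integral_circ T_def by (simp add: field_simps)
  finally show ?thesis .
qed

lemma T_cont:
  assumes r: "0 < r" "r < 1"
  shows "continuous_on (ball 0 1 \<times> ball 0 r) (\<lambda>(u, w). T m r u w)"
proof -
  have "continuous_on ((ball 0 1 \<times> ball 0 r) \<times> cbox 0 1)
     (\<lambda>x. F (fst (fst x), circ r (snd x)) * circ' r (snd x) / (circ r (snd x) - snd (fst x)) ^ Suc m)"
  proof (intro continuous_intros)
    show cc: "continuous_on ((ball 0 1 \<times> ball 0 r) \<times> cbox 0 1) (\<lambda>x. circ r (snd x))"
      by (rule continuous_on_compose2[OF continuous_circ(1)]) (auto intro: continuous_intros)
    show "continuous_on ((ball 0 1 \<times> ball 0 r) \<times> cbox 0 1) (\<lambda>x. F (fst (fst x), circ r (snd x)))"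
      apply (rule continuous_on_compose2[OF contF])
       apply (intro continuous_intros cc)
      using r by auto
    show "continuous_on ((ball 0 1 \<times> ball 0 r) \<times> cbox 0 1) (\<lambda>x. circ' r (snd x))"
      by (rule continuous_on_compose2[OF continuous_circ(2)]) (auto intro: continuous_intros)
  qed (use r in \<open>auto dest: circ_ne\<close>)
  from integral_continuous_on_param[of "ball 0 1 \<times> ball 0 r" 0 1 "\<lambda>x t. F (fst x, circ r t) * circ' r t / (circ r t - snd x) ^ Suc m"] this
  show ?thesis by (simp add: T_def split_beta cbox_interval)
qed

lemma Phi_cont:
  assumes r: "0 < r" "r < 1"
  shows "continuous_on (ball 0 1 \<times> ball 0 r) (\<lambda>(u, w). Phi m u w)"
proof (rule continuous_on_eq)
  show "continuous_on (ball 0 1 \<times> ball 0 r) (\<lambda>x. fact m / (2 * of_real pi * \<i>) * (\<lambda>(u, w). T m r u w) x)"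
    by (intro continuous_intros T_cont r)
  show "\<And>x. x \<in> ball 0 1 \<times> ball 0 r \<Longrightarrow> fact m / (2 * of_real pi * \<i>) * (\<lambda>(u, w). T m r u w) x = (\<lambda>(u, w). Phi m u w) x"
    using Phi_T r by auto
qed

lemma swap: "sep_holo (\<lambda>z. F (snd z, fst z))"
proof
  show "continuous_on (ball 0 1 \<times> ball 0 1) (\<lambda>z. F (snd z, fst z))"
    by (rule continuous_on_compose2[OF contF]) (auto intro!: continuous_intros)
qed (use h1 h2 in auto)

end

context sep_holo
begin

lemma deriv1_cont:
  assumes r: "0 < r" "r < 1"
  shows "continuous_on (ball 0 1 \<times> ball 0 r) (\<lambda>(v, u). deriv (\<lambda>u'. F (u', v)) u)"
proof -
  interpret S: sep_holo "\<lambda>z. F (snd z, fst z)" by (rule swap)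
  have "(\<lambda>(v, u). deriv (\<lambda>u'. F (u', v)) u) = (\<lambda>(v, u). S.Phi 1 v u)"
    by (simp add: S.Phi_def)
  with S.Phi_cont[OF r, of 1] show ?thesis by simp
qed

lemma T_hol:
  assumes r: "0 < r" "r < 1" and w: "cmod w < r"
  shows "(\<lambda>u. T m r u w) holomorphic_on ball 0 r"
proof -
  let ?f = "\<lambda>u t. F (u, circ r t) * circ' r t / (circ r t - w) ^ Suc m"
  let ?fx = "\<lambda>u t. deriv (\<lambda>u'. F (u', circ r t)) u * circ' r t / (circ r t - w) ^ Suc m"
  have "(\<lambda>u. integral (cbox 0 1) (?f u)) holomorphic_on ball 0 r"
  proof (rule leibniz_rule_holomorphic)
    fix x t assume x: "x \<in> ball (0::complex) r" and t: "t \<in> cbox (0::real) 1"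
    have "(\<lambda>u. F (u, circ r t)) holomorphic_on ball 0 1" using h1 r by simp
    moreover have "x \<in> ball 0 1" using x r by auto
    ultimately have "((\<lambda>u. F (u, circ r t)) has_field_derivative deriv (\<lambda>u'. F (u', circ r t)) x) (at x within ball 0 r)"
      using holomorphic_derivI[of _ "ball 0 1"] by auto
    then show "((\<lambda>x. ?f x t) has_field_derivative ?fx x t) (at x within ball 0 r)"
      by (intro DERIV_cdivide DERIV_cmult_right)
  next
    fix x assume x: "x \<in> ball (0::complex) r"
    have "continuous_on (cbox 0 1) (?f x)"
    proof (intro continuous_intros)
      show "continuous_on (cbox 0 1) (\<lambda>t. F (x, circ r t))"
        by (rule continuous_on_compose2[OF contF]) (use x r in \<open>auto intro!: continuous_intros\<close>)
    qed (use w in \<open>auto dest: circ_ne\<close>)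
    then show "?f x integrable_on cbox 0 1" by (rule integrable_continuous)
  next
    have "continuous_on (ball 0 r \<times> cbox 0 1) (\<lambda>x. deriv (\<lambda>u'. F (u', circ r (snd x))) (fst x) * circ' r (snd x) / (circ r (snd x) - w) ^ Suc m)"
    proof (intro continuous_intros)
      show "continuous_on (ball 0 r \<times> cbox 0 1) (\<lambda>x. deriv (\<lambda>u'. F (u', circ r (snd x))) (fst x))"
      proof (rule continuous_on_compose2[OF deriv1_cont[OF r], of _ "\<lambda>x. (circ r (snd x), fst x)", simplified])
        show "continuous_on (ball 0 r \<times> cbox 0 1) (\<lambda>x. (circ r (snd x), fst x))"
          by (intro continuous_intros continuous_on_compose2[OF continuous_circ(1)]) auto
      qed (use r in auto)
      show "continuous_on (ball 0 r \<times> cbox 0 1) (\<lambda>x. circ' r (snd x))"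
        by (rule continuous_on_compose2[OF continuous_circ(2)]) (auto intro: continuous_intros)
      show "continuous_on (ball 0 r \<times> cbox 0 1) (\<lambda>x. circ r (snd x))"
        by (rule continuous_on_compose2[OF continuous_circ(1)]) (auto intro: continuous_intros)
    qed (use w in \<open>auto dest: circ_ne\<close>)
    then show "continuous_on (ball 0 r \<times> cbox 0 1) (\<lambda>(x, t). ?fx x t)"
      by (simp add: split_beta)
  qed auto
  then show ?thesis by (simp add: T_def cbox_interval)
qed

lemma Phi_hol:
  assumes r: "0 < r" "r < 1" and w: "cmod w < r"
  shows "(\<lambda>u. Phi m u w) holomorphic_on ball 0 r"
proof (rule holomorphic_transform)
  show "(\<lambda>u. fact m / (2 * of_real pi * \<i>) * T m r u w) holomorphic_on ball 0 r"
    by (intro holomorphic_intros T_hol r w)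
  show "\<And>x. x \<in> ball 0 r \<Longrightarrow> fact m / (2 * of_real pi * \<i>) * T m r x w = Phi m x w"
    using Phi_T r w by auto
qed

lemma P_eq: "(pd1 ^^ k) ((pd2 ^^ m) F) (u, w) = (deriv ^^ k) (\<lambda>u. Phi m u w) u"
proof -
  have "(\<lambda>u'. (pd2 ^^ m) F (u', w)) = (\<lambda>u'. Phi m u' w)"
    by (simp add: pd2_pow Phi_def)
  then show ?thesis by (simp add: pd1_pow)
qed

lemma R1:
  assumes z: "cmod z < 1" and w: "cmod w < 1"
  shows "((\<lambda>u. (pd1 ^^ k) ((pd2 ^^ m) F) (u, w)) has_field_derivative (pd1 ^^ Suc k) ((pd2 ^^ m) F) (z, w)) (at z)"
proof -
  define r where "r = (1 + max (cmod z) (cmod w)) / 2"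
  have r: "0 < r" "r < 1" "cmod z < r" "cmod w < r" using z w by (auto simp: r_def max_def intro: add_pos_nonneg)
  have "((deriv ^^ k) (\<lambda>u. Phi m u w) has_field_derivative (deriv ^^ Suc k) (\<lambda>u. Phi m u w) z) (at z)"
    by (rule has_field_derivative_higher_deriv[OF Phi_hol]) (use r in auto)
  then show ?thesis by (simp only: P_eq)
qed

lemma R2:
  assumes z: "cmod z < 1" and w: "cmod w < 1"
  shows "((\<lambda>v. (pd1 ^^ k) ((pd2 ^^ m) F) (z, v)) has_field_derivative (pd1 ^^ k) ((pd2 ^^ Suc m) F) (z, w)) (at w)"
proof -
  define r where "r = (1 + max (cmod z) (cmod w)) / 2"
  define r2 where "r2 = (1 + r) / 2"
  have r: "0 < r" "r < 1" "cmod z < r" "cmod w < r" "r < r2" "r2 < 1" using z w by (auto simp: r_def r2_def max_def intro: add_pos_nonneg)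
  define W where "W = (\<lambda>m v. fact k / (2 * of_real pi * \<i>) *
      integral (cbox 0 1) (\<lambda>s. Phi m (circ r s) v * circ' r s / (circ r s - z) ^ Suc k))"
  have eqW: "(pd1 ^^ k) ((pd2 ^^ m') F) (z, v) = W m' v" if v: "v \<in> ball 0 r" for v m'
  proof -
    have hol2: "(\<lambda>u. Phi m' u v) holomorphic_on ball 0 r2"
      by (rule Phi_hol) (use r v in auto)
    have "cball 0 r \<subseteq> ball (0::complex) r2" using r by auto
    then have c: "continuous_on (cball 0 r) (\<lambda>u. Phi m' u v)"
      using hol2 holomorphic_on_imp_continuous_on continuous_on_subset by blast
    have hb: "(\<lambda>u. Phi m' u v) holomorphic_on ball 0 r"
      using hol2 holomorphic_on_subset r by auto
    have "(pd1 ^^ k) ((pd2 ^^ m') F) (z, v) = fact k / (2 * of_real pi * \<i>) *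
       contour_integral (circlepath 0 r) (\<lambda>u. Phi m' u v / (u - z) ^ Suc k)"
      unfolding P_eq
      using Cauchy_higher_derivative_integral_circlepath(2)[OF c hb, of z k] r by simp
    also have "\<dots> = W m' v"
      unfolding contour_integral_circ W_def cbox_interval
      by (intro arg_cong[where f="\<lambda>x. fact k / (2 * of_real pi * \<i>) * x"] integral_cong) (rule times_divide_eq_left)
    finally show ?thesis .
  qed
  have contPhi: "continuous_on (ball 0 r \<times> cbox 0 1) (\<lambda>x. Phi m' (circ r (snd x)) (fst x))" for m'
  proof (rule continuous_on_compose2[OF Phi_cont[OF r(1,2)], of _ "\<lambda>x. (circ r (snd x), fst x)", simplified])
    show "continuous_on (ball 0 r \<times> cbox 0 1) (\<lambda>x. (circ r (snd x), fst x))"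
      by (intro continuous_intros continuous_on_compose2[OF continuous_circ(1)]) auto
  qed (use r in auto)
  have contfx: "continuous_on (ball 0 r \<times> cbox 0 1) (\<lambda>x. Phi m' (circ r (snd x)) (fst x) * circ' r (snd x) / (circ r (snd x) - z) ^ Suc k)" for m'
  proof (intro continuous_intros contPhi)
    show "continuous_on (ball 0 r \<times> cbox 0 1) (\<lambda>x. circ' r (snd x))"
      by (rule continuous_on_compose2[OF continuous_circ(2)]) (auto intro: continuous_intros)
    show "continuous_on (ball 0 r \<times> cbox 0 1) (\<lambda>x. circ r (snd x))"
      by (rule continuous_on_compose2[OF continuous_circ(1)]) (auto intro: continuous_intros)
  qed (use r in \<open>auto dest: circ_ne\<close>)
  have "((\<lambda>v. integral (cbox 0 1) (\<lambda>s. Phi m (circ r s) v * circ' r s / (circ r s - z) ^ Suc k))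
      has_field_derivative integral (cbox 0 1) (\<lambda>s. Phi (Suc m) (circ r s) w * circ' r s / (circ r s - z) ^ Suc k))
      (at w within ball 0 r)"
  proof (rule leibniz_rule_field_derivative)
    fix x t assume x: "x \<in> ball (0::complex) r" and t: "t \<in> cbox (0::real) 1"
    have "(\<lambda>v. F (circ r t, v)) holomorphic_on ball 0 1" using h2 r by simp
    moreover have "x \<in> ball 0 1" using x r by auto
    ultimately have "((deriv ^^ m) (\<lambda>v. F (circ r t, v)) has_field_derivative (deriv ^^ Suc m) (\<lambda>v. F (circ r t, v)) x) (at x)"
      by (intro has_field_derivative_higher_deriv) auto
    then have "((\<lambda>v. Phi m (circ r t) v) has_field_derivative Phi (Suc m) (circ r t) x) (at x)"
      by (simp only: Phi_def)
    then have "((\<lambda>v. Phi m (circ r t) v) has_field_derivative Phi (Suc m) (circ r t) x) (at x within ball 0 r)"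
      by (rule has_field_derivative_at_within)
    then show "((\<lambda>v. Phi m (circ r t) v * circ' r t / (circ r t - z) ^ Suc k) has_field_derivative
       Phi (Suc m) (circ r t) x * circ' r t / (circ r t - z) ^ Suc k) (at x within ball 0 r)"
      by (intro DERIV_cdivide DERIV_cmult_right)
  next
    fix x assume x: "x \<in> ball (0::complex) r"
    have "continuous_on (cbox 0 1) ((\<lambda>x. Phi m (circ r (snd x)) (fst x) * circ' r (snd x) / (circ r (snd x) - z) ^ Suc k) \<circ> (\<lambda>s. (x, s)))"
    proof (rule continuous_on_compose)
      show "continuous_on (cbox 0 1) (Pair x)" by (intro continuous_intros)
      show "continuous_on (Pair x ` cbox 0 1) (\<lambda>x. Phi m (circ r (snd x)) (fst x) * circ' r (snd x) / (circ r (snd x) - z) ^ Suc k)"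
        by (rule continuous_on_subset[OF contfx]) (use x in auto)
    qed
    then have "continuous_on (cbox 0 1) (\<lambda>s. Phi m (circ r s) x * circ' r s / (circ r s - z) ^ Suc k)"
      by (simp add: o_def)
    then show "(\<lambda>s. Phi m (circ r s) x * circ' r s / (circ r s - z) ^ Suc k) integrable_on cbox 0 1"
      by (rule integrable_continuous)
  next
    show "continuous_on (ball 0 r \<times> cbox 0 1) (\<lambda>(x, t). Phi (Suc m) (circ r t) x * circ' r t / (circ r t - z) ^ Suc k)"
      using contfx[of "Suc m"] by (simp add: split_beta)
  qed (use r in auto)
  then have "(W m has_field_derivative W (Suc m) w) (at w within ball 0 r)"
    unfolding W_def by (rule DERIV_cmult)
  moreover have "at w within ball 0 r = at w"
    by (rule at_within_open) (use r in auto)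
  ultimately have "(W m has_field_derivative W (Suc m) w) (at w)"
    by (simp only:)
  then have "((\<lambda>v. (pd1 ^^ k) ((pd2 ^^ m) F) (z, v)) has_field_derivative W (Suc m) w) (at w)"
  proof (rule has_field_derivative_transform_within_open[of _ _ _ "ball 0 r"])
    show "w \<in> ball 0 r" using r by simp
    show "\<And>x. x \<in> ball 0 r \<Longrightarrow> W m x = (pd1 ^^ k) ((pd2 ^^ m) F) (z, x)"
      using eqW by metis
  qed simp
  moreover have "W (Suc m) w = (pd1 ^^ k) ((pd2 ^^ Suc m) F) (z, w)"
    using eqW[of w "Suc m"] r(4) by (metis mem_ball_0)
  ultimately show ?thesis by (simp only:)
qed

end

context sep_holo
begin

lemma slice1_hol:
  assumes w: "cmod w < 1"
  shows "(\<lambda>u. (pd1 ^^ k) ((pd2 ^^ m) F) (u, w)) holomorphic_on ball 0 1"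
  unfolding holomorphic_on_open[OF open_ball]
proof
  fix x :: complex assume "x \<in> ball 0 1"
  then have "((\<lambda>u. (pd1 ^^ k) ((pd2 ^^ m) F) (u, w)) has_field_derivative (pd1 ^^ Suc k) ((pd2 ^^ m) F) (x, w)) (at x)"
    using R1[of x w k m] w by simp
  then show "\<exists>f'. ((\<lambda>u. (pd1 ^^ k) ((pd2 ^^ m) F) (u, w)) has_field_derivative f') (at x)" by blast
qed

lemma slice2_hol:
  assumes u: "cmod u < 1"
  shows "(\<lambda>v. (pd1 ^^ k) ((pd2 ^^ m) F) (u, v)) holomorphic_on ball 0 1"
  unfolding holomorphic_on_open[OF open_ball]
proof
  fix x :: complex assume "x \<in> ball 0 1"
  then have "((\<lambda>v. (pd1 ^^ k) ((pd2 ^^ m) F) (u, v)) has_field_derivative (pd1 ^^ k) ((pd2 ^^ Suc m) F) (u, x)) (at x)"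
    using R2[of u x k m] u by simp
  then show "\<exists>f'. ((\<lambda>v. (pd1 ^^ k) ((pd2 ^^ m) F) (u, v)) has_field_derivative f') (at x)" by blast
qed

lemma hR2:
  assumes u: "cmod u < 1" and v: "cmod v < 1"
  shows "(deriv ^^ s) (\<lambda>v. (pd1 ^^ k) ((pd2 ^^ m) F) (u, v)) v = (pd1 ^^ k) ((pd2 ^^ (m + s)) F) (u, v)"
  using v
proof (induction s arbitrary: v)
  case 0 then show ?case by simp
next
  case (Suc s)
  have "((\<lambda>v. (pd1 ^^ k) ((pd2 ^^ (m + s)) F) (u, v)) has_field_derivative (pd1 ^^ k) ((pd2 ^^ Suc (m + s)) F) (u, v)) (at v)"
    by (rule R2[OF u Suc.prems])
  then have "((deriv ^^ s) (\<lambda>v. (pd1 ^^ k) ((pd2 ^^ m) F) (u, v)) has_field_derivative (pd1 ^^ k) ((pd2 ^^ Suc (m + s)) F) (u, v)) (at v)"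
  proof (rule has_field_derivative_transform_within_open[of _ _ _ "ball 0 1"])
    show "\<And>x. x \<in> ball 0 1 \<Longrightarrow> (pd1 ^^ k) ((pd2 ^^ (m + s)) F) (u, x) = (deriv ^^ s) (\<lambda>v. (pd1 ^^ k) ((pd2 ^^ m) F) (u, v)) x"
      using Suc.IH by simp
  qed (use Suc.prems in auto)
  then have "deriv ((deriv ^^ s) (\<lambda>v. (pd1 ^^ k) ((pd2 ^^ m) F) (u, v))) v = (pd1 ^^ k) ((pd2 ^^ Suc (m + s)) F) (u, v)"
    by (rule DERIV_imp_deriv)
  moreover have "(deriv ^^ Suc s) (\<lambda>v. (pd1 ^^ k) ((pd2 ^^ m) F) (u, v)) v = deriv ((deriv ^^ s) (\<lambda>v. (pd1 ^^ k) ((pd2 ^^ m) F) (u, v))) v"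
    by simp
  ultimately show ?case unfolding add_Suc_right by (simp only:)
qed

end

lemma hR1: "(deriv ^^ s) (\<lambda>u. (pd1 ^^ k) G (u, w)) u = (pd1 ^^ (s + k)) G (u, w)"
  by (simp only: funpow_add o_apply pd1_pow fst_conv snd_conv)

lemma an_sep:
  assumes "analytic2_on F D2"
  shows "sep_holo F"
proof
  have der: "\<exists>a b. (F has_derivative (\<lambda>h. a * fst h + b * snd h)) (at z)" if "z \<in> ball 0 1 \<times> ball 0 1" for z
    using assms that unfolding analytic2_on_def D2_eq by blast
  show "continuous_on (ball 0 1 \<times> ball 0 1) F"
    by (rule continuous_at_imp_continuous_on) (use der has_derivative_continuous in blast)
  show "(\<lambda>u. F (u, v)) holomorphic_on ball 0 1" if v: "v \<in> ball 0 1" for v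
    unfolding holomorphic_on_open[OF open_ball]
  proof
    fix u :: complex assume u: "u \<in> ball 0 1"
    obtain a b where d: "(F has_derivative (\<lambda>h. a * fst h + b * snd h)) (at (u, v))"
      using der[of "(u, v)"] u v by auto
    have p: "((\<lambda>u. (u, v)) has_derivative (\<lambda>h. (h, 0))) (at u)"
      by (auto intro!: derivative_eq_intros)
    have "((\<lambda>u. F (u, v)) has_derivative (\<lambda>h. a * fst (h, 0::complex) + b * snd (h, 0::complex))) (at u)"
      using has_derivative_compose[OF p d] by (simp add: o_def)
    then have "((\<lambda>u. F (u, v)) has_field_derivative a) (at u)"
      unfolding has_field_derivative_def by (rule has_derivative_eq_rhs) (auto simp: fun_eq_iff)
    then show "\<exists>f'. ((\<lambda>u. F (u, v)) has_field_derivative f') (at u)" by blast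
  qed
  show "(\<lambda>v. F (u, v)) holomorphic_on ball 0 1" if u: "u \<in> ball 0 1" for u
    unfolding holomorphic_on_open[OF open_ball]
  proof
    fix v :: complex assume v: "v \<in> ball 0 1"
    obtain a b where d: "(F has_derivative (\<lambda>h. a * fst h + b * snd h)) (at (u, v))"
      using der[of "(u, v)"] u v by auto
    have p: "((\<lambda>v. (u, v)) has_derivative (\<lambda>h. (0, h))) (at v)"
      by (auto intro!: derivative_eq_intros)
    have "((\<lambda>v. F (u, v)) has_derivative (\<lambda>h. a * fst (0::complex, h) + b * snd (0::complex, h))) (at v)"
      using has_derivative_compose[OF p d] by (simp add: o_def)
    then have "((\<lambda>v. F (u, v)) has_field_derivative b) (at v)"
      unfolding has_field_derivative_def by (rule has_derivative_eq_rhs) (auto simp: fun_eq_iff)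
    then show "\<exists>f'. ((\<lambda>v. F (u, v)) has_field_derivative f') (at v)" by blast
  qed
qed

lemma continuous_on_Max_fun:
  assumes "finite K" "K \<noteq> {}" "\<And>k. k \<in> K \<Longrightarrow> continuous_on X (f k)"
  shows "continuous_on X (\<lambda>u. Max ((\<lambda>k. f k u) ` K) :: real)"
  using assms
proof (induction K rule: finite_ne_induct)
  case (singleton x) then show ?case by simp
next
  case (insert x F)
  have "continuous_on X (\<lambda>u. max (f x u) (Max ((\<lambda>k. f k u) ` F)))"
    by (intro continuous_on_max insert) auto
  then show ?case using insert by simp
qed

lemma grow_step:
  fixes h h' :: "'i \<Rightarrow> complex \<Rightarrow> complex" and w :: "'i \<Rightarrow> real"
  assumes K: "finite K" "K \<noteq> {}"
    and X: "convex X" "compact X" "a \<in> X" "\<And>u. u \<in> X \<Longrightarrow> cmod (u - a) \<le> \<rho>"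
    and der: "\<And>k u. k \<in> K \<Longrightarrow> u \<in> X \<Longrightarrow> (h k has_field_derivative h' k u) (at u)"
    and wpos: "\<And>k. k \<in> K \<Longrightarrow> w k > 0"
    and bnd: "\<And>k u. k \<in> K \<Longrightarrow> u \<in> X \<Longrightarrow> cmod (h' k u) \<le> B * w k * Max ((\<lambda>j. cmod (h j u) / w j) ` K)"
    and B: "B \<ge> 0" "\<rho> * B \<le> 1/2"
    and u: "u \<in> X"
  shows "Max ((\<lambda>j. cmod (h j u) / w j) ` K) \<le> 2 * Max ((\<lambda>j. cmod (h j a) / w j) ` K)"
proof -
  define S where "S = (\<lambda>u. Max ((\<lambda>j. cmod (h j u) / w j) ` K))"
  have Sge: "cmod (h j u) / w j \<le> S u" if "j \<in> K" for j u
    unfolding S_def using K that by (intro Max_ge) auto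
  have S0: "0 \<le> S u" for u
  proof -
    obtain j where "j \<in> K" using K by auto
    then show ?thesis using Sge[of j u] wpos[of j] by (meson divide_nonneg_pos norm_ge_zero order_trans less_le)
  qed
  have cont: "continuous_on X S"
    unfolding S_def
  proof (rule continuous_on_Max_fun[OF K])
    fix k assume k: "k \<in> K"
    have "continuous_on X (h k)"
      by (rule continuous_at_imp_continuous_on) (use der[OF k] DERIV_isCont in blast)
    then show "continuous_on X (\<lambda>u. cmod (h k u) / w k)"
      using wpos[OF k] by (intro continuous_intros) auto
  qed
  obtain u0 where u0: "u0 \<in> X" "\<And>y. y \<in> X \<Longrightarrow> S y \<le> S u0"
    using continuous_attains_sup[OF X(2) _ cont] X(3) by blast
  define M where "M = S u0"
  have Sdef: "S v = Max ((\<lambda>j. cmod (h j v) / w j) ` K)" for v by (simp add: S_def)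
  have key: "S y \<le> S a + M / 2" if y: "y \<in> X" for y
    unfolding Sdef[of y]
  proof (rule Max.boundedI)
    show "finite ((\<lambda>j. cmod (h j y) / w j) ` K)" "(\<lambda>j. cmod (h j y) / w j) ` K \<noteq> {}" using K by auto
    fix t assume "t \<in> (\<lambda>j. cmod (h j y) / w j) ` K"
    then obtain k where k: "k \<in> K" and t: "t = cmod (h k y) / w k" by auto
    have wk: "w k > 0" using wpos k by auto
    have "cmod (h k y - h k a) \<le> (B * w k * M) * cmod (y - a)"
    proof (rule field_differentiable_bound[OF X(1) _ _ y X(3)])
      show "\<And>z. z \<in> X \<Longrightarrow> (h k has_field_derivative h' k z) (at z within X)"
        using der[OF k] has_field_derivative_at_within by blast
      fix z assume z: "z \<in> X"
      have "cmod (h' k z) \<le> B * w k * S z" using bnd[OF k z] by (simp add: S_def)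
      also have "\<dots> \<le> B * w k * M"
        using u0(2)[OF z] B wk by (simp add: M_def mult_left_mono)
      finally show "cmod (h' k z) \<le> B * w k * M" .
    qed
    also have "\<dots> \<le> (B * w k * M) * \<rho>"
      using X(4)[OF y] B wk S0[of u0] by (intro mult_left_mono) (auto simp: M_def)
    also have "\<dots> = w k * (\<rho> * B) * M" by (simp add: algebra_simps)
    also have "\<dots> \<le> w k * (1/2) * M"
      using B wk S0[of u0] by (intro mult_right_mono mult_left_mono) (auto simp: M_def)
    finally have "cmod (h k y - h k a) \<le> w k * (M / 2)" by simp
    then have "cmod (h k y) \<le> cmod (h k a) + w k * (M / 2)"
      using norm_triangle_sub[of "h k y" "h k a"] by linarith
    then have "cmod (h k y) / w k \<le> cmod (h k a) / w k + M / 2"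
      using wk by (simp add: field_simps)
    also have "\<dots> \<le> S a + M / 2" using Sge[OF k, of a] by simp
    finally show "t \<le> S a + M / 2" using t by simp
  qed
  have "M \<le> S a + M / 2" using key[OF u0(1)] by (simp add: M_def)
  then have "M \<le> 2 * S a" by simp
  moreover have "S u \<le> M" using u0(2)[OF u] by (simp add: M_def)
  ultimately show ?thesis by (simp add: S_def)
qed

lemma grow_chain:
  fixes h h' :: "'i \<Rightarrow> complex \<Rightarrow> complex" and w :: "'i \<Rightarrow> real"
  assumes K: "finite K" "K \<noteq> {}"
    and X: "convex X" "compact X" "a \<in> X" "u \<in> X"
    and der: "\<And>k z. k \<in> K \<Longrightarrow> z \<in> X \<Longrightarrow> (h k has_field_derivative h' k z) (at z)"
    and wpos: "\<And>k. k \<in> K \<Longrightarrow> w k > 0"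
    and bnd: "\<And>k z. k \<in> K \<Longrightarrow> z \<in> X \<Longrightarrow> cmod (h' k z) \<le> B * w k * Max ((\<lambda>j. cmod (h j z) / w j) ` K)"
    and B: "B \<ge> 0" "\<rho> > 0" "\<rho> * B \<le> 1/2"
    and dist: "cmod (u - a) \<le> real N * \<rho>"
  shows "Max ((\<lambda>j. cmod (h j u) / w j) ` K) \<le> 2 ^ N * Max ((\<lambda>j. cmod (h j a) / w j) ` K)"
proof (cases "N = 0")
  case True
  then have "u = a" using dist by simp
  then show ?thesis using True by simp
next
  case False
  define S where "S = (\<lambda>u. Max ((\<lambda>j. cmod (h j u) / w j) ` K))"
  define q where "q = (\<lambda>i::nat. a + of_real (real i / real N) * (u - a))"
  have qX: "q i \<in> X" if "i \<le> N" for i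
  proof -
    define t where "t = real i / real N"
    have t: "0 \<le> t" "t \<le> 1" using that False by (auto simp: t_def)
    have "(1 - t) *\<^sub>R a + t *\<^sub>R u \<in> X"
      by (rule convexD[OF X(1) X(3) X(4)]) (use t in auto)
    moreover have "(1 - t) *\<^sub>R a + t *\<^sub>R u = a + of_real t * (u - a)"
      by (simp add: scaleR_conv_of_real algebra_simps)
    moreover have "q i = a + of_real t * (u - a)"
      unfolding q_def t_def ..
    ultimately show ?thesis by metis
  qed
  have qstep: "cmod (q (Suc i) - q i) \<le> \<rho>" for i
  proof -
    have "q (Suc i) - q i = of_real (1 / real N) * (u - a)"
      using False by (simp add: q_def field_simps)
    then have "cmod (q (Suc i) - q i) = cmod (u - a) / real N"
      by (simp add: norm_mult norm_divide)
    also have "\<dots> \<le> \<rho>" using dist False by (simp add: field_simps)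
    finally show ?thesis .
  qed
  have "S (q i) \<le> 2 ^ i * S a" if "i \<le> N" for i
    using that
  proof (induction i)
    case 0 then show ?case by (simp add: q_def)
  next
    case (Suc i)
    have "S (q (Suc i)) \<le> 2 * S (q i)"
      unfolding S_def
    proof (rule grow_step[OF K, of "X \<inter> cball (q i) \<rho>" "q i" \<rho> h h' w B])
      show "convex (X \<inter> cball (q i) \<rho>)" using X(1) by (simp add: convex_Int)
      show "compact (X \<inter> cball (q i) \<rho>)" using X(2) by (simp add: compact_Int_closed)
      show "q i \<in> X \<inter> cball (q i) \<rho>" using qX Suc.prems B by auto
      show "q (Suc i) \<in> X \<inter> cball (q i) \<rho>"
        using qX[OF Suc.prems] qstep[of i] by (auto simp: dist_norm norm_minus_commute)
      show "\<And>v. v \<in> X \<inter> cball (q i) \<rho> \<Longrightarrow> cmod (v - q i) \<le> \<rho>"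
        by (auto simp: dist_norm norm_minus_commute)
    qed (use der wpos bnd B in auto)
    also have "\<dots> \<le> 2 * (2 ^ i * S a)" using Suc by simp
    finally show ?case by simp
  qed
  from this[of N] show ?thesis using False by (simp add: S_def q_def)
qed

lemma polydisc_mem: "z \<in> polydisc z0 (r1, r2) \<longleftrightarrow> cmod (fst z - fst z0) \<le> r1 \<and> cmod (snd z - snd z0) \<le> r2"
  by (simp add: polydisc_def)

lemma D2_mem: "z \<in> D2 \<longleftrightarrow> cmod (fst z) < 1 \<and> cmod (snd z) < 1"
  by (simp add: D2_def)

lemma fin_le: "finite {(k1, k2). k1 + k2 \<le> (p::nat)}"
  by (rule finite_subset[of _ "{..p} \<times> {..p}"]) auto

lemma fin_eq: "finite {(k1, k2). k1 + k2 = (p::nat)}"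
  by (rule finite_subset[of _ "{..p} \<times> {..p}"]) auto

lemma pow_le_pow_Lam:
  fixes x y L :: real
  assumes "0 \<le> y" "y \<le> L * x" "0 \<le> x"
  shows "y ^ k \<le> L ^ k * x ^ k"
  using power_mono[OF assms(2) assms(1)] by (simp add: power_mult_distrib)

lemma pow_ge_pow_Lam:
  fixes x y L :: real
  assumes "0 \<le> L" "L * x \<le> y" "0 \<le> x"
  shows "L ^ k * x ^ k \<le> y ^ k"
  using power_mono[OF assms(2)] assms by (simp add: power_mult_distrib)

locale conv = sep_holo F for F +
  fixes l1 l2 :: "complex \<times> complex \<Rightarrow> real" and \<beta> c \<Lambda>1 \<Lambda>2 :: real and p :: nat
  assumes beta: "\<beta> > 1" and lpos: "\<And>z. z \<in> D2 \<Longrightarrow> l1 z > 0 \<and> l2 z > 0"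
   and sub: "\<And>z0 z. z0 \<in> D2 \<Longrightarrow> z \<in> polydisc z0 (\<beta> / l1 z0, \<beta> / l2 z0) \<Longrightarrow> z \<in> D2"
   and L: "0 < \<Lambda>1" "\<Lambda>1 \<le> 1" "1 \<le> \<Lambda>2"
   and lam: "\<And>z0 z. z0 \<in> D2 \<Longrightarrow> z \<in> polydisc z0 (\<beta> / l1 z0, \<beta> / l2 z0) \<Longrightarrow>
        \<Lambda>1 * l1 z0 \<le> l1 z \<and> l1 z \<le> \<Lambda>2 * l1 z0 \<and> \<Lambda>1 * l2 z0 \<le> l2 z \<and> l2 z \<le> \<Lambda>2 * l2 z0"
   and c: "c \<ge> 0"
   and hyp: "\<And>z. z \<in> D2 \<Longrightarrow>
       Max ((\<lambda>(j1, j2). cmod (pderiv2 F j1 j2 z) / (l1 z ^ j1 * l2 z ^ j2)) ` {(j1, j2). j1 + j2 = p + 1})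
       \<le> c * Max ((\<lambda>(k1, k2). cmod (pderiv2 F k1 k2 z) / (l1 z ^ k1 * l2 z ^ k2)) ` {(k1, k2). k1 + k2 \<le> p})"
begin

definition "KK = {(k1, k2). k1 + k2 \<le> p}"
definition "lw k z = l1 z ^ fst k * l2 z ^ snd k"
definition "Nf k z = cmod (pderiv2 F (fst k) (snd k) z) / lw k z"
definition "g z = Max ((\<lambda>k. Nf k z) ` KK)"
definition "S z0 z = Max ((\<lambda>k. cmod (pderiv2 F (fst k) (snd k) z) / lw k z0) ` KK)"
definition "CC = max c 1"
definition "A = CC * \<Lambda>2 ^ (p + 1) / \<Lambda>1 ^ p"
definition "\<delta> = 1 / (2 * A)"
definition "NN = nat \<lceil>\<beta> / \<delta>\<rceil>"

lemma KK: "finite KK" "KK \<noteq> {}" "(0, 0) \<in> KK"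
  using fin_le[of p] by (auto simp: KK_def intro!: exI[of _ 0])

lemma lw_pos: "z \<in> D2 \<Longrightarrow> lw k z > 0"
  using lpos[of z] by (simp add: lw_def)

lemma A_pos: "A \<ge> 1"
proof -
  have "\<Lambda>2 ^ (p + 1) \<ge> 1" using L by (intro one_le_power)
  moreover have "\<Lambda>1 ^ p \<le> 1" "\<Lambda>1 ^ p > 0" using L by (auto simp: power_le_one)
  moreover have "CC \<ge> 1" by (simp add: CC_def)
  ultimately have "CC * \<Lambda>2 ^ (p + 1) \<ge> 1 * \<Lambda>1 ^ p"
    by (metis mult_mono' mult.commute mult_1 order.trans zero_le_one)
  then show ?thesis unfolding A_def using \<open>\<Lambda>1 ^ p > 0\<close> by (simp add: field_simps)
qed

lemma g_ge: "k \<in> KK \<Longrightarrow> Nf k z \<le> g z"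
  unfolding g_def using KK by (intro Max_ge) auto

lemma Nf_nonneg: "z \<in> D2 \<Longrightarrow> Nf k z \<ge> 0"
  using lw_pos[of z k] by (simp add: Nf_def)

lemma g_nonneg: "z \<in> D2 \<Longrightarrow> g z \<ge> 0"
  using g_ge[OF KK(3), of z] Nf_nonneg[of z "(0,0)"] by linarith

lemma S_ge: "k \<in> KK \<Longrightarrow> cmod (pderiv2 F (fst k) (snd k) z) / lw k z0 \<le> S z0 z"
  unfolding S_def using KK by (intro Max_ge) auto

lemma S_nonneg: "z0 \<in> D2 \<Longrightarrow> S z0 z \<ge> 0"
  using S_ge[OF KK(3), of z z0] lw_pos[of z0 "(0,0)"] by (smt (verit) divide_nonneg_pos norm_ge_zero)

lemma S_self: "S z0 z0 = g z0"
  by (simp add: S_def g_def Nf_def)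

lemma lw_upper:
  assumes z0: "z0 \<in> D2" and z: "z \<in> polydisc z0 (\<beta> / l1 z0, \<beta> / l2 z0)" and k: "fst k + snd k \<le> p + 1"
  shows "lw k z \<le> \<Lambda>2 ^ (p + 1) * lw k z0"
proof -
  have zD: "z \<in> D2" by (rule sub[OF z0 z])
  note lm = lam[OF z0 z]
  have p1: "l1 z ^ fst k \<le> \<Lambda>2 ^ fst k * l1 z0 ^ fst k"
    by (rule pow_le_pow_Lam) (use lm lpos[OF zD] lpos[OF z0] in auto)
  have p2: "l2 z ^ snd k \<le> \<Lambda>2 ^ snd k * l2 z0 ^ snd k"
    by (rule pow_le_pow_Lam) (use lm lpos[OF zD] lpos[OF z0] in auto)
  have "lw k z \<le> (\<Lambda>2 ^ fst k * l1 z0 ^ fst k) * (\<Lambda>2 ^ snd k * l2 z0 ^ snd k)"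
    unfolding lw_def by (rule mult_mono[OF p1 p2]) (use lpos[OF zD] lpos[OF z0] L in auto)
  also have "\<dots> = \<Lambda>2 ^ (fst k + snd k) * lw k z0" by (simp add: lw_def power_add)
  also have "\<dots> \<le> \<Lambda>2 ^ (p + 1) * lw k z0"
    by (rule mult_right_mono[OF power_increasing[OF k L(3)]]) (use lw_pos[OF z0] less_imp_le in blast)
  finally show ?thesis .
qed

lemma lw_lower:
  assumes z0: "z0 \<in> D2" and z: "z \<in> polydisc z0 (\<beta> / l1 z0, \<beta> / l2 z0)" and k: "fst k + snd k \<le> p"
  shows "\<Lambda>1 ^ p * lw k z0 \<le> lw k z"
proof -
  have zD: "z \<in> D2" by (rule sub[OF z0 z])
  note lm = lam[OF z0 z]
  have p1: "\<Lambda>1 ^ fst k * l1 z0 ^ fst k \<le> l1 z ^ fst k"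
    by (rule pow_ge_pow_Lam) (use lm lpos[OF zD] lpos[OF z0] L in auto)
  have p2: "\<Lambda>1 ^ snd k * l2 z0 ^ snd k \<le> l2 z ^ snd k"
    by (rule pow_ge_pow_Lam) (use lm lpos[OF zD] lpos[OF z0] L in auto)
  have "\<Lambda>1 ^ p * lw k z0 \<le> \<Lambda>1 ^ (fst k + snd k) * lw k z0"
    by (rule mult_right_mono[OF power_decreasing[OF k]]) (use L lw_pos[OF z0, of k] in auto)
  also have "\<dots> = (\<Lambda>1 ^ fst k * l1 z0 ^ fst k) * (\<Lambda>1 ^ snd k * l2 z0 ^ snd k)"
    by (simp add: lw_def power_add)
  also have "\<dots> \<le> lw k z"
    unfolding lw_def by (rule mult_mono[OF p1 p2]) (use lpos[OF zD] lpos[OF z0] L in auto)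
  finally show ?thesis .
qed

end

context conv
begin

lemma g_form: "Max ((\<lambda>(k1, k2). cmod (pderiv2 F k1 k2 z) / (l1 z ^ k1 * l2 z ^ k2)) ` {(k1, k2). k1 + k2 \<le> p}) = g z"
proof -
  have "(\<lambda>(k1, k2). cmod (pderiv2 F k1 k2 z) / (l1 z ^ k1 * l2 z ^ k2)) = (\<lambda>k. Nf k z)"
    by (auto simp: fun_eq_iff Nf_def lw_def)
  then show ?thesis by (simp add: g_def KK_def)
qed

lemma f2:
  assumes z0: "z0 \<in> D2" and z: "z \<in> polydisc z0 (\<beta> / l1 z0, \<beta> / l2 z0)"
  shows "g z \<le> S z0 z / \<Lambda>1 ^ p"
  unfolding g_def
proof (rule Max.boundedI)
  show "finite ((\<lambda>k. Nf k z) ` KK)" "(\<lambda>k. Nf k z) ` KK \<noteq> {}" using KK by auto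
  fix t assume "t \<in> (\<lambda>k. Nf k z) ` KK"
  then obtain k where k: "k \<in> KK" and t: "t = Nf k z" by auto
  have kp: "fst k + snd k \<le> p" using k by (auto simp: KK_def)
  have zD: "z \<in> D2" by (rule sub[OF z0 z])
  have pos: "0 < \<Lambda>1 ^ p * lw k z0" using L lw_pos[OF z0] by simp
  have "Nf k z \<le> cmod (pderiv2 F (fst k) (snd k) z) / (\<Lambda>1 ^ p * lw k z0)"
    unfolding Nf_def by (rule divide_left_mono[OF lw_lower[OF z0 z kp]]) (use pos lw_pos[OF zD] in auto)
  also have "\<dots> = (cmod (pderiv2 F (fst k) (snd k) z) / lw k z0) / \<Lambda>1 ^ p" by simp
  also have "\<dots> \<le> S z0 z / \<Lambda>1 ^ p"
    by (rule divide_right_mono[OF S_ge[OF k]]) (use L in auto)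
  finally show "t \<le> S z0 z / \<Lambda>1 ^ p" using t by simp
qed

lemma f3:
  assumes z: "z \<in> D2" and j: "fst j + snd j \<le> p + 1"
  shows "cmod (pderiv2 F (fst j) (snd j) z) \<le> CC * lw j z * g z"
proof -
  have lwp: "lw j z > 0" by (rule lw_pos[OF z])
  have "Nf j z \<le> CC * g z"
  proof (cases "fst j + snd j \<le> p")
    case True
    then have "Nf j z \<le> g z" by (intro g_ge) (auto simp: KK_def)
    also have "\<dots> \<le> CC * g z" using g_nonneg[OF z] by (simp add: CC_def mult_le_cancel_right1)
    finally show ?thesis .
  next
    case False
    then have jeq: "fst j + snd j = p + 1" using j by simp
    have "Nf j z \<le> Max ((\<lambda>(j1, j2). cmod (pderiv2 F j1 j2 z) / (l1 z ^ j1 * l2 z ^ j2)) ` {(j1, j2). j1 + j2 = p + 1})"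
    proof (rule Max_ge)
      show "finite ((\<lambda>(j1, j2). cmod (pderiv2 F j1 j2 z) / (l1 z ^ j1 * l2 z ^ j2)) ` {(j1, j2). j1 + j2 = p + 1})"
        using fin_eq by simp
      show "Nf j z \<in> (\<lambda>(j1, j2). cmod (pderiv2 F j1 j2 z) / (l1 z ^ j1 * l2 z ^ j2)) ` {(j1, j2). j1 + j2 = p + 1}"
        using jeq by (intro image_eqI[of _ _ j]) (auto simp: Nf_def lw_def split_beta)
    qed
    also have "\<dots> \<le> c * g z" using hyp[OF z] g_form by simp
    also have "\<dots> \<le> CC * g z" using g_nonneg[OF z] by (intro mult_right_mono) (auto simp: CC_def)
    finally show ?thesis .
  qed
  then have "Nf j z * lw j z \<le> CC * g z * lw j z" using lwp by (intro mult_right_mono) auto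
  then show ?thesis using lwp by (simp add: Nf_def algebra_simps)
qed

lemma f4:
  assumes z0: "z0 \<in> D2" and z: "z \<in> polydisc z0 (\<beta> / l1 z0, \<beta> / l2 z0)" and j: "fst j + snd j \<le> p + 1"
  shows "cmod (pderiv2 F (fst j) (snd j) z) \<le> A * lw j z0 * S z0 z"
proof -
  have zD: "z \<in> D2" by (rule sub[OF z0 z])
  have CC: "CC \<ge> 1" by (simp add: CC_def)
  have "cmod (pderiv2 F (fst j) (snd j) z) \<le> CC * lw j z * g z" by (rule f3[OF zD j])
  also have "\<dots> \<le> CC * (\<Lambda>2 ^ (p + 1) * lw j z0) * (S z0 z / \<Lambda>1 ^ p)"
  proof (intro mult_mono mult_left_mono lw_upper[OF z0 z j] f2[OF z0 z])
  qed (use CC g_nonneg[OF zD] lw_pos[OF zD, of j] L S_nonneg[OF z0, of z] lw_pos[OF z0, of j] in auto)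
  also have "\<dots> = A * lw j z0 * S z0 z" by (simp add: A_def)
  finally show ?thesis .
qed

end

context conv
begin

lemma delta_pos: "\<delta> > 0" using A_pos by (simp add: \<delta>_def)

lemma NN_bound: "\<beta> \<le> real NN * \<delta>"
proof -
  have "\<beta> / \<delta> \<le> real NN" unfolding NN_def by (rule real_nat_ceiling_ge)
  then show ?thesis using delta_pos by (simp add: field_simps)
qed

lemma A_delta: "\<delta> * A = 1/2" using A_pos by (simp add: \<delta>_def)

lemma G1:
  assumes z0: "z0 \<in> D2" and u: "cmod (u - fst z0) \<le> \<beta> / l1 z0"
  shows "S z0 (u, snd z0) \<le> 2 ^ NN * S z0 z0"
proof -
  have l1p: "l1 z0 > 0" and l2p: "l2 z0 > 0" using lpos[OF z0] by auto
  have inP: "(v, snd z0) \<in> polydisc z0 (\<beta> / l1 z0, \<beta> / l2 z0)" if "v \<in> cball (fst z0) (\<beta> / l1 z0)" for v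
    using that l2p beta by (auto simp: polydisc_mem dist_norm norm_minus_commute)
  have inD: "cmod v < 1" "cmod (snd z0) < 1" if "v \<in> cball (fst z0) (\<beta> / l1 z0)" for v
    using sub[OF z0 inP[OF that]] by (auto simp: D2_mem)
  have "Max ((\<lambda>j. cmod (pderiv2 F (fst j) (snd j) (u, snd z0)) / lw j z0) ` KK)
      \<le> 2 ^ NN * Max ((\<lambda>j. cmod (pderiv2 F (fst j) (snd j) (fst z0, snd z0)) / lw j z0) ` KK)"
  proof (rule grow_chain[OF KK(1,2), of "cball (fst z0) (\<beta> / l1 z0)" "fst z0" u
        "\<lambda>k v. pderiv2 F (fst k) (snd k) (v, snd z0)" "\<lambda>k v. pderiv2 F (Suc (fst k)) (snd k) (v, snd z0)"
        "\<lambda>k. lw k z0" "A * l1 z0" "\<delta> / l1 z0" NN])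
    show "convex (cball (fst z0) (\<beta> / l1 z0))" "compact (cball (fst z0) (\<beta> / l1 z0))" by auto
    show "fst z0 \<in> cball (fst z0) (\<beta> / l1 z0)" using l1p beta by simp
    show "u \<in> cball (fst z0) (\<beta> / l1 z0)" using u by (simp add: dist_norm norm_minus_commute)
    show "((\<lambda>v. pderiv2 F (fst k) (snd k) (v, snd z0)) has_field_derivative pderiv2 F (Suc (fst k)) (snd k) (v, snd z0)) (at v)"
      if "k \<in> KK" "v \<in> cball (fst z0) (\<beta> / l1 z0)" for k v
      unfolding pderiv2_def by (rule R1) (use inD[OF that(2)] in auto)
    show "lw k z0 > 0" for k by (rule lw_pos[OF z0])
    show "cmod (pderiv2 F (Suc (fst k)) (snd k) (v, snd z0)) \<le> A * l1 z0 * lw k z0 *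
        Max ((\<lambda>j. cmod (pderiv2 F (fst j) (snd j) (v, snd z0)) / lw j z0) ` KK)"
      if k: "k \<in> KK" and v: "v \<in> cball (fst z0) (\<beta> / l1 z0)" for k v
    proof -
      have "fst (Suc (fst k), snd k) + snd (Suc (fst k), snd k) \<le> p + 1" using k by (auto simp: KK_def)
      from f4[OF z0 inP[OF v] this]
      have "cmod (pderiv2 F (Suc (fst k)) (snd k) (v, snd z0)) \<le> A * lw (Suc (fst k), snd k) z0 * S z0 (v, snd z0)"
        by simp
      then show ?thesis by (simp add: lw_def S_def algebra_simps)
    qed
    show "0 \<le> A * l1 z0" using A_pos l1p by simp
    show "0 < \<delta> / l1 z0" using delta_pos l1p by simp
    show "\<delta> / l1 z0 * (A * l1 z0) \<le> 1 / 2" using A_delta l1p by simp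
    have "\<beta> / l1 z0 \<le> real NN * \<delta> / l1 z0" by (rule divide_right_mono[OF NN_bound]) (use l1p in simp)
    then show "cmod (u - fst z0) \<le> real NN * (\<delta> / l1 z0)" using u by simp
  qed
  then show ?thesis by (simp add: S_def)
qed

lemma G2:
  assumes z0: "z0 \<in> D2" and u: "cmod (u - fst z0) \<le> \<beta> / l1 z0" and w: "cmod (w - snd z0) \<le> \<beta> / l2 z0"
  shows "S z0 (u, w) \<le> 2 ^ NN * S z0 (u, snd z0)"
proof -
  have l1p: "l1 z0 > 0" and l2p: "l2 z0 > 0" using lpos[OF z0] by auto
  have inP: "(u, v) \<in> polydisc z0 (\<beta> / l1 z0, \<beta> / l2 z0)" if "v \<in> cball (snd z0) (\<beta> / l2 z0)" for v
    using that u by (auto simp: polydisc_mem dist_norm norm_minus_commute)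
  have inD: "cmod u < 1" "cmod v < 1" if "v \<in> cball (snd z0) (\<beta> / l2 z0)" for v
    using sub[OF z0 inP[OF that]] by (auto simp: D2_mem)
  have "Max ((\<lambda>j. cmod (pderiv2 F (fst j) (snd j) (u, w)) / lw j z0) ` KK)
      \<le> 2 ^ NN * Max ((\<lambda>j. cmod (pderiv2 F (fst j) (snd j) (u, snd z0)) / lw j z0) ` KK)"
  proof (rule grow_chain[OF KK(1,2), of "cball (snd z0) (\<beta> / l2 z0)" "snd z0" w
        "\<lambda>k v. pderiv2 F (fst k) (snd k) (u, v)" "\<lambda>k v. pderiv2 F (fst k) (Suc (snd k)) (u, v)"
        "\<lambda>k. lw k z0" "A * l2 z0" "\<delta> / l2 z0" NN])
    show "convex (cball (snd z0) (\<beta> / l2 z0))" "compact (cball (snd z0) (\<beta> / l2 z0))" by auto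
    show "snd z0 \<in> cball (snd z0) (\<beta> / l2 z0)" using l2p beta by simp
    show "w \<in> cball (snd z0) (\<beta> / l2 z0)" using w by (simp add: dist_norm norm_minus_commute)
    show "((\<lambda>v. pderiv2 F (fst k) (snd k) (u, v)) has_field_derivative pderiv2 F (fst k) (Suc (snd k)) (u, v)) (at v)"
      if "k \<in> KK" "v \<in> cball (snd z0) (\<beta> / l2 z0)" for k v
      unfolding pderiv2_def by (rule R2) (use inD[OF that(2)] in auto)
    show "lw k z0 > 0" for k by (rule lw_pos[OF z0])
    show "cmod (pderiv2 F (fst k) (Suc (snd k)) (u, v)) \<le> A * l2 z0 * lw k z0 *
        Max ((\<lambda>j. cmod (pderiv2 F (fst j) (snd j) (u, v)) / lw j z0) ` KK)"
      if k: "k \<in> KK" and v: "v \<in> cball (snd z0) (\<beta> / l2 z0)" for k v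
    proof -
      have "fst (fst k, Suc (snd k)) + snd (fst k, Suc (snd k)) \<le> p + 1" using k by (auto simp: KK_def)
      from f4[OF z0 inP[OF v] this]
      have "cmod (pderiv2 F (fst k) (Suc (snd k)) (u, v)) \<le> A * lw (fst k, Suc (snd k)) z0 * S z0 (u, v)"
        by simp
      then show ?thesis by (simp add: lw_def S_def algebra_simps)
    qed
    show "0 \<le> A * l2 z0" using A_pos l2p by simp
    show "0 < \<delta> / l2 z0" using delta_pos l2p by simp
    show "\<delta> / l2 z0 * (A * l2 z0) \<le> 1 / 2" using A_delta l2p by simp
    have "\<beta> / l2 z0 \<le> real NN * \<delta> / l2 z0" by (rule divide_right_mono[OF NN_bound]) (use l2p in simp)
    then show "cmod (w - snd z0) \<le> real NN * (\<delta> / l2 z0)" using w by simp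
  qed
  then show ?thesis by (simp add: S_def)
qed

lemma G:
  assumes z0: "z0 \<in> D2" and z: "z \<in> polydisc z0 (\<beta> / l1 z0, \<beta> / l2 z0)"
  shows "S z0 z \<le> 4 ^ NN * g z0"
proof -
  obtain u w where zz: "z = (u, w)" by (cases z)
  have u: "cmod (u - fst z0) \<le> \<beta> / l1 z0" and w: "cmod (w - snd z0) \<le> \<beta> / l2 z0"
    using z by (auto simp: zz polydisc_mem)
  have "S z0 z \<le> 2 ^ NN * S z0 (u, snd z0)" using G2[OF z0 u w] zz by simp
  also have "\<dots> \<le> 2 ^ NN * (2 ^ NN * S z0 z0)" using G1[OF z0 u] by simp
  also have "\<dots> = 4 ^ NN * g z0" by (simp add: S_self power_mult_distrib[symmetric])
  finally show ?thesis .
qed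

lemma H:
  assumes z0: "z0 \<in> D2" and z: "z \<in> polydisc z0 (\<beta> / l1 z0, \<beta> / l2 z0)" and k: "k \<in> KK"
  shows "cmod (pderiv2 F (fst k) (snd k) z) \<le> lw k z0 * (4 ^ NN * g z0)"
proof -
  have "cmod (pderiv2 F (fst k) (snd k) z) / lw k z0 \<le> 4 ^ NN * g z0"
    using S_ge[OF k, of z z0] G[OF z0 z] by linarith
  then show ?thesis using lw_pos[OF z0, of k] by (simp add: field_simps)
qed

end

context conv
begin

lemma Cau:
  assumes z0: "z0 \<in> D2" and k: "(k1, k2) \<in> KK"
  shows "cmod (pderiv2 F (k1 + s1) (k2 + s2) z0) \<le>
     fact s1 * (fact s2 * (lw (k1, k2) z0 * (4 ^ NN * g z0)) / (\<beta> / l2 z0) ^ s2) / (\<beta> / l1 z0) ^ s1"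
proof -
  obtain a b where zz: "z0 = (a, b)" by (cases z0)
  define r1 where "r1 = \<beta> / l1 z0"
  define r2 where "r2 = \<beta> / l2 z0"
  define Bd where "Bd = lw (k1, k2) z0 * (4 ^ NN * g z0)"
  have r1: "r1 > 0" and r2: "r2 > 0" using lpos[OF z0] beta by (auto simp: r1_def r2_def)
  have inP: "(u, v) \<in> polydisc z0 (\<beta> / l1 z0, \<beta> / l2 z0)" if "cmod (u - a) \<le> r1" "cmod (v - b) \<le> r2" for u v
    using that by (simp add: polydisc_mem zz r1_def r2_def)
  have inD: "cmod u < 1 \<and> cmod v < 1" if "cmod (u - a) \<le> r1" "cmod (v - b) \<le> r2" for u v
    using sub[OF z0 inP[OF that]] by (simp add: D2_mem)
  have ab: "cmod a < 1" "cmod b < 1" using inD[of a b] r1 r2 by auto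
  have stepA: "cmod (pderiv2 F k1 (k2 + s2) (u, b)) \<le> fact s2 * Bd / r2 ^ s2" if u: "cmod (u - a) \<le> r1" for u
  proof -
    have u1: "cmod u < 1" using inD[OF u, of b] r2 by simp
    have sub2: "cball b r2 \<subseteq> ball 0 1"
    proof
      fix v assume "v \<in> cball b r2"
      then have "cmod (v - b) \<le> r2" by (simp add: dist_norm norm_minus_commute[of b v])
      then show "v \<in> ball 0 1" using inD[OF u, of v] by simp
    qed
    have hol: "(\<lambda>v. pderiv2 F k1 k2 (u, v)) holomorphic_on ball 0 1"
      unfolding pderiv2_def by (rule slice2_hol[OF u1])
    have "pderiv2 F k1 (k2 + s2) (u, b) = (deriv ^^ s2) (\<lambda>v. pderiv2 F k1 k2 (u, v)) b"
      unfolding pderiv2_def by (rule hR2[OF u1 ab(2), symmetric])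
    also have "cmod \<dots> \<le> fact s2 * Bd / r2 ^ s2"
    proof (rule Cauchy_inequality)
      show "(\<lambda>v. pderiv2 F k1 k2 (u, v)) holomorphic_on ball b r2"
        by (rule holomorphic_on_subset[OF hol]) (use sub2 in auto)
      show "continuous_on (cball b r2) (\<lambda>v. pderiv2 F k1 k2 (u, v))"
        by (rule continuous_on_subset[OF holomorphic_on_imp_continuous_on[OF hol] sub2])
      show "0 < r2" by (rule r2)
      fix x assume "cmod (b - x) = r2"
      then have "cmod (x - b) \<le> r2" by (simp add: norm_minus_commute)
      from H[OF z0 inP[OF u this] k] show "cmod (pderiv2 F k1 k2 (u, x)) \<le> Bd" by (simp add: Bd_def)
    qed
    finally show ?thesis .
  qed
  have sub1: "cball a r1 \<subseteq> ball 0 1"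
  proof
    fix v assume "v \<in> cball a r1"
    then have "cmod (v - a) \<le> r1" by (simp add: dist_norm norm_minus_commute[of a v])
    then show "v \<in> ball 0 1" using inD[of v b] r2 by simp
  qed
  have hol1: "(\<lambda>u. pderiv2 F k1 (k2 + s2) (u, b)) holomorphic_on ball 0 1"
    unfolding pderiv2_def by (rule slice1_hol[OF ab(2)])
  have "pderiv2 F (k1 + s1) (k2 + s2) z0 = (deriv ^^ s1) (\<lambda>u. pderiv2 F k1 (k2 + s2) (u, b)) a"
    unfolding pderiv2_def zz hR1 by (simp add: add.commute)
  also have "cmod \<dots> \<le> fact s1 * (fact s2 * Bd / r2 ^ s2) / r1 ^ s1"
  proof (rule Cauchy_inequality)
    show "(\<lambda>u. pderiv2 F k1 (k2 + s2) (u, b)) holomorphic_on ball a r1"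
      by (rule holomorphic_on_subset[OF hol1]) (use sub1 in auto)
    show "continuous_on (cball a r1) (\<lambda>u. pderiv2 F k1 (k2 + s2) (u, b))"
      by (rule continuous_on_subset[OF holomorphic_on_imp_continuous_on[OF hol1] sub1])
    show "0 < r1" by (rule r1)
    fix x assume "cmod (a - x) = r1"
    then have "cmod (x - a) \<le> r1" by (simp add: norm_minus_commute)
    then show "cmod (pderiv2 F k1 (k2 + s2) (x, b)) \<le> fact s2 * Bd / r2 ^ s2" by (rule stepA)
  qed
  finally show ?thesis by (simp add: Bd_def r1_def r2_def)
qed

end

lemma fact_mult_le: "fact a * fact b \<le> (fact (a + b) :: real)"
proof -
  have e: "fact a * fact b * ((a + b) choose a) = (fact (a + b) :: nat)"
    using binomial_fact_lemma[of a "a + b"] by simp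
  have "(a + b) choose a \<ge> 1" by (simp add: Suc_leI zero_less_binomial)
  then have "fact a * fact b * 1 \<le> (fact a * fact b * ((a + b) choose a) :: nat)"
    by (intro mult_le_mono2)
  then have "fact a * fact b \<le> (fact (a + b) :: nat)" using e by simp
  then have "real (fact a * fact b) \<le> real (fact (a + b))" by (simp only: of_nat_le_iff)
  then show ?thesis by (simp only: of_nat_mult of_nat_fact)
qed

context conv
begin

lemma bounded: "bounded_L_index l1 l2 F"
proof -
  obtain m where m: "4 ^ NN * fact p < \<beta> ^ m" using real_arch_pow[OF beta] by blast
  define n0 where "n0 = p + m"
  define T where "T = (\<lambda>z k1 k2. cmod (pderiv2 F k1 k2 z) / (fact k1 * fact k2 * l1 z ^ k1 * l2 z ^ k2))"
  have main: "T z p1 p2 \<le> Max ((\<lambda>(k1, k2). T z k1 k2) ` {(k1, k2). k1 + k2 \<le> n0})"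
    if z: "z \<in> D2" for z p1 p2
  proof -
    define Mn where "Mn = Max ((\<lambda>(k1, k2). T z k1 k2) ` {(k1, k2). k1 + k2 \<le> n0})"
    define M0 where "M0 = Max ((\<lambda>(k1, k2). T z k1 k2) ` KK)"
    have L1: "l1 z > 0" and L2: "l2 z > 0" using lpos[OF z] by auto
    have Tnn: "T z a b \<ge> 0" for a b using L1 L2 by (simp add: T_def)
    have finn: "finite {(k1, k2). k1 + k2 \<le> n0}" by (rule fin_le)
    show ?thesis
    proof (cases "p1 + p2 \<le> n0")
      case True
      then show ?thesis using finn by (intro Max_ge) (auto intro!: image_eqI[of _ _ "(p1, p2)"])
    next
      case False
      define k1 where "k1 = min p1 p"
      define k2 where "k2 = p - k1"
      define s1 where "s1 = p1 - k1"
      define s2 where "s2 = p2 - k2"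
      have ks: "k1 + s1 = p1" "k2 + s2 = p2" "(k1, k2) \<in> KK" "m \<le> s1 + s2"
        using False by (auto simp: k1_def k2_def s1_def s2_def KK_def n0_def)
      define Q :: real where "Q = 4 ^ NN"
      define G where "G = g z"
      have G0: "G \<ge> 0" using g_nonneg[OF z] by (simp add: G_def)
      have Q0: "Q > 0" by (simp add: Q_def)
      have bpos: "\<beta> > 0" using beta by simp
      have "cmod (pderiv2 F p1 p2 z) \<le>
         fact s1 * (fact s2 * (lw (k1, k2) z * (4 ^ NN * g z)) / (\<beta> / l2 z) ^ s2) / (\<beta> / l1 z) ^ s1"
        using Cau[OF z ks(3), of s1 s2] ks by simp
      also have "\<dots> = fact s1 * fact s2 * (Q * G) * (l1 z ^ (k1 + s1) * l2 z ^ (k2 + s2)) / \<beta> ^ (s1 + s2)"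
        using L1 L2 bpos by (simp add: lw_def Q_def G_def power_divide power_add field_simps)
      finally have c1: "cmod (pderiv2 F p1 p2 z) \<le> fact s1 * fact s2 * (Q * G) * (l1 z ^ p1 * l2 z ^ p2) / \<beta> ^ (s1 + s2)"
        using ks by simp
      have dpos: "fact p1 * fact p2 * l1 z ^ p1 * l2 z ^ p2 > 0" using L1 L2 by simp
      have "T z p1 p2 \<le> (fact s1 * fact s2 * (Q * G) * (l1 z ^ p1 * l2 z ^ p2) / \<beta> ^ (s1 + s2)) / (fact p1 * fact p2 * l1 z ^ p1 * l2 z ^ p2)"
        unfolding T_def by (rule divide_right_mono[OF c1]) (use dpos in simp)
      also have "\<dots> = (fact s1 / fact p1) * (fact s2 / fact p2) * (Q * G / \<beta> ^ (s1 + s2))"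
        using L1 L2 by (simp add: field_simps)
      also have "\<dots> \<le> 1 * 1 * (Q * G / \<beta> ^ (s1 + s2))"
      proof (intro mult_right_mono mult_mono)
        show "fact s1 / fact p1 \<le> (1::real)" using fact_mono[of s1 p1] ks(1) by (simp add: field_simps)
        show "fact s2 / fact p2 \<le> (1::real)" using fact_mono[of s2 p2] ks(2) by (simp add: field_simps)
      qed (use Q0 G0 bpos in auto)
      also have "\<dots> = Q * G / \<beta> ^ (s1 + s2)" by simp
      also have "\<dots> \<le> Q * (fact p * M0) / \<beta> ^ (s1 + s2)"
      proof -
        have "G \<le> fact p * M0"
          unfolding G_def g_def
        proof (rule Max.boundedI)
          show "finite ((\<lambda>k. Nf k z) ` KK)" "(\<lambda>k. Nf k z) ` KK \<noteq> {}" using KK by auto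
          fix t assume "t \<in> (\<lambda>k. Nf k z) ` KK"
          then obtain a b where ab: "(a, b) \<in> KK" and t: "t = Nf (a, b) z" by auto
          have abp: "a + b \<le> p" using ab by (auto simp: KK_def)
          have ff: "fact a * fact b \<le> (fact p :: real)"
            by (rule order.trans[OF fact_mult_le fact_mono[OF abp]])
          have TM: "T z a b \<le> M0" unfolding M0_def using KK ab
            by (intro Max_ge) (auto intro!: image_eqI[of _ _ "(a, b)"])
          have "Nf (a, b) z = (fact a * fact b) * T z a b"
            using L1 L2 by (simp add: Nf_def lw_def T_def field_simps)
          also have "\<dots> \<le> fact p * M0"
            by (rule mult_mono[OF ff TM]) (use Tnn in auto)
          finally show "t \<le> fact p * M0" using t by simp
        qed
        then show ?thesis using Q0 bpos by (intro divide_right_mono mult_left_mono) auto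
      qed
      also have "\<dots> = (Q * fact p / \<beta> ^ (s1 + s2)) * M0" by simp
      also have "\<dots> \<le> 1 * M0"
      proof (rule mult_right_mono)
        have "\<beta> ^ m \<le> \<beta> ^ (s1 + s2)" by (rule power_increasing[OF ks(4)]) (use beta in simp)
        then have "Q * fact p \<le> \<beta> ^ (s1 + s2)" using m by (simp add: Q_def)
        then show "Q * fact p / \<beta> ^ (s1 + s2) \<le> 1" using bpos by simp
        show "0 \<le> M0" unfolding M0_def using KK Tnn
          by (intro order.trans[OF Tnn[of 0 0]] Max_ge) (auto intro!: image_eqI[of _ _ "(0, 0)"])
      qed
      also have "\<dots> \<le> Mn"
        unfolding M0_def Mn_def mult_1
        using KK finn by (intro Max_mono image_mono) (auto simp: KK_def n0_def)
      finally show ?thesis by (simp add: Mn_def)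
    qed
  qed
  show ?thesis
    unfolding bounded_L_index_def
    by (intro exI[of _ n0] ballI allI) (use main in \<open>simp add: T_def\<close>)
qed

end

lemma lam_extract:
  assumes a: "0 < lambda1 l1 l2 lj R" "lambda1 l1 l2 lj R \<le> lambda2 l1 l2 lj R" "lambda2 l1 l2 lj R < \<infinity>"
  shows "\<exists>x1 x2. 0 < x1 \<and> (\<forall>z0\<in>D2. \<forall>z\<in>D2 \<inter> polydisc z0 (fst R / l1 z0, snd R / l2 z0).
            x1 \<le> lj z / lj z0 \<and> lj z / lj z0 \<le> x2)"
proof -
  obtain x1 where x1: "lambda1 l1 l2 lj R = ereal x1"
    using a by (cases "lambda1 l1 l2 lj R") auto
  obtain x2 where x2: "lambda2 l1 l2 lj R = ereal x2"
    using a by (cases "lambda2 l1 l2 lj R") auto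
  have "0 < x1" using a(1) x1 by simp
  moreover have "x1 \<le> lj z / lj z0 \<and> lj z / lj z0 \<le> x2"
    if z0: "z0 \<in> D2" and z: "z \<in> D2 \<inter> polydisc z0 (fst R / l1 z0, snd R / l2 z0)" for z0 z
  proof -
    have "lambda1 l1 l2 lj R \<le> ereal (lj z / lj z0)"
      unfolding lambda1_def by (rule INF_lower2[OF z0]) (rule INF_lower[OF z])
    moreover have "ereal (lj z / lj z0) \<le> lambda2 l1 l2 lj R"
      unfolding lambda2_def by (rule SUP_upper2[OF z0]) (rule SUP_upper[OF z])
    ultimately show ?thesis using x1 x2 by simp
  qed
  ultimately show ?thesis by blast
qed

theorem theorem6:
  fixes \<beta> :: real
    and l1 l2 :: "complex \<times> complex \<Rightarrow> real"
    and F :: "complex \<times> complex \<Rightarrow> complex"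
  assumes beta: "\<beta> > 1"
    and l1_cont: "continuous_on D2 l1" and l2_cont: "continuous_on D2 l2"
    and l1_nonneg: "\<forall>z\<in>D2. l1 z \<ge> 0" and l2_nonneg: "\<forall>z\<in>D2. l2 z \<ge> 0"
    and l1_gt: "\<forall>z\<in>D2. l1 z > \<beta> / (1 - cmod (fst z))"
    and l2_gt: "\<forall>z\<in>D2. l2 z > \<beta> / (1 - cmod (snd z))"
    and LQ: "Q2 \<beta> l1 l2"
    and F_an: "analytic2_on F D2"
  shows "bounded_L_index l1 l2 F \<longleftrightarrow>
    (\<exists>(p::nat) (c::real). c \<ge> 0 \<and> (\<forall>z\<in>D2.
       Max ((\<lambda>(j1, j2). cmod (pderiv2 F j1 j2 z) / (l1 z ^ j1 * l2 z ^ j2))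
              ` {(j1, j2). j1 + j2 = p + 1})
       \<le> c * Max ((\<lambda>(k1, k2). cmod (pderiv2 F k1 k2 z) / (l1 z ^ k1 * l2 z ^ k2))
              ` {(k1, k2). k1 + k2 \<le> p})))"
proof
  assume "bounded_L_index l1 l2 F"
  then obtain n0 :: nat where n0: "\<forall>z\<in>D2. \<forall>p1 p2::nat.
       cmod (pderiv2 F p1 p2 z) / (fact p1 * fact p2 * l1 z ^ p1 * l2 z ^ p2)
       \<le> Max ((\<lambda>(k1, k2). cmod (pderiv2 F k1 k2 z) / (fact k1 * fact k2 * l1 z ^ k1 * l2 z ^ k2))
                ` {(k1, k2). k1 + k2 \<le> n0})"
    unfolding bounded_L_index_def by blast
  show "\<exists>(p::nat) (c::real). c \<ge> 0 \<and> (\<forall>z\<in>D2.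
       Max ((\<lambda>(j1, j2). cmod (pderiv2 F j1 j2 z) / (l1 z ^ j1 * l2 z ^ j2))
              ` {(j1, j2). j1 + j2 = p + 1})
       \<le> c * Max ((\<lambda>(k1, k2). cmod (pderiv2 F k1 k2 z) / (l1 z ^ k1 * l2 z ^ k2))
              ` {(k1, k2). k1 + k2 \<le> p}))"
  proof (intro exI[of _ n0] exI[of _ "fact (n0 + 1)"] conjI ballI)
    show "0 \<le> (fact (n0 + 1) :: real)" by simp
    fix z assume z: "z \<in> D2"
    have lp: "l1 z > 0" "l2 z > 0"
    proof -
      have "1 - cmod (fst z) > 0" "1 - cmod (snd z) > 0" using z by (auto simp: D2_mem)
      then show "l1 z > 0" "l2 z > 0" using l1_gt z l2_gt beta
        by (smt (verit) divide_pos_pos)+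
    qed
    define MK where "MK = Max ((\<lambda>(k1, k2). cmod (pderiv2 F k1 k2 z) / (l1 z ^ k1 * l2 z ^ k2)) ` {(k1, k2). k1 + k2 \<le> n0})"
    define MB where "MB = Max ((\<lambda>(k1, k2). cmod (pderiv2 F k1 k2 z) / (fact k1 * fact k2 * l1 z ^ k1 * l2 z ^ k2)) ` {(k1, k2). k1 + k2 \<le> n0})"
    have MB0: "0 \<le> MB" unfolding MB_def using fin_le[of n0] lp
      by (intro order.trans[OF _ Max_ge[of _ "cmod (pderiv2 F 0 0 z) / (fact 0 * fact 0 * l1 z ^ 0 * l2 z ^ 0)"]])
         (auto intro!: image_eqI[of _ _ "(0, 0)"])
    have MBK: "MB \<le> MK"
      unfolding MB_def
    proof (rule Max.boundedI)
      show "finite ((\<lambda>(k1, k2). cmod (pderiv2 F k1 k2 z) / (fact k1 * fact k2 * l1 z ^ k1 * l2 z ^ k2)) ` {(k1, k2). k1 + k2 \<le> n0})"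
        using fin_le by simp
      show "(\<lambda>(k1, k2). cmod (pderiv2 F k1 k2 z) / (fact k1 * fact k2 * l1 z ^ k1 * l2 z ^ k2)) ` {(k1, k2). k1 + k2 \<le> n0} \<noteq> {}"
        by (auto intro!: exI[of _ 0])
      fix t assume "t \<in> (\<lambda>(k1, k2). cmod (pderiv2 F k1 k2 z) / (fact k1 * fact k2 * l1 z ^ k1 * l2 z ^ k2)) ` {(k1, k2). k1 + k2 \<le> n0}"
      then obtain a b where ab: "a + b \<le> n0" and t: "t = cmod (pderiv2 F a b z) / (fact a * fact b * l1 z ^ a * l2 z ^ b)"
        by auto
      have ff: "(1::real) \<le> fact a * fact b" using fact_ge_1[of a] fact_ge_1[of b]
        by (metis mult_mono' mult_1 zero_le_one)
      have "t \<le> cmod (pderiv2 F a b z) / (l1 z ^ a * l2 z ^ b)"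
        unfolding t using lp ff
        by (intro divide_left_mono) (auto simp: mult.assoc intro!: mult_pos_pos order.trans[OF _ mult_right_mono[OF ff]])
      also have "\<dots> \<le> MK" unfolding MK_def using fin_le[of n0] ab
        by (intro Max_ge) (auto intro!: image_eqI[of _ _ "(a, b)"])
      finally show "t \<le> MK" .
    qed
    show "Max ((\<lambda>(j1, j2). cmod (pderiv2 F j1 j2 z) / (l1 z ^ j1 * l2 z ^ j2)) ` {(j1, j2). j1 + j2 = n0 + 1})
       \<le> fact (n0 + 1) * MK" unfolding MK_def[symmetric]
    proof (rule Max.boundedI)
      show "finite ((\<lambda>(j1, j2). cmod (pderiv2 F j1 j2 z) / (l1 z ^ j1 * l2 z ^ j2)) ` {(j1, j2). j1 + j2 = n0 + 1})"
        using fin_eq by simp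
      have "(0, n0 + 1) \<in> {(j1, j2). j1 + j2 = n0 + 1}" by simp
      then show "(\<lambda>(j1, j2). cmod (pderiv2 F j1 j2 z) / (l1 z ^ j1 * l2 z ^ j2)) ` {(j1, j2). j1 + j2 = n0 + 1} \<noteq> {}"
        by blast
      fix t assume "t \<in> (\<lambda>(j1, j2). cmod (pderiv2 F j1 j2 z) / (l1 z ^ j1 * l2 z ^ j2)) ` {(j1, j2). j1 + j2 = n0 + 1}"
      then obtain a b where ab: "a + b = n0 + 1" and t: "t = cmod (pderiv2 F a b z) / (l1 z ^ a * l2 z ^ b)"
        by auto
      have ff: "fact a * fact b \<le> (fact (n0 + 1) :: real)" using fact_mult_le[of a b] ab by simp
      have "t = (fact a * fact b) * (cmod (pderiv2 F a b z) / (fact a * fact b * l1 z ^ a * l2 z ^ b))"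
        unfolding t using lp by (simp add: field_simps)
      also have "\<dots> \<le> fact (n0 + 1) * MB"
      proof (rule mult_mono[OF ff])
        show "cmod (pderiv2 F a b z) / (fact a * fact b * l1 z ^ a * l2 z ^ b) \<le> MB"
          unfolding MB_def using n0 z by blast
      qed (use MB0 lp in auto)
      also have "\<dots> \<le> fact (n0 + 1) * MK" using MBK by (intro mult_left_mono) auto
      finally show "t \<le> fact (n0 + 1) * MK" .
    qed
  qed
next
  assume "\<exists>(p::nat) (c::real). c \<ge> 0 \<and> (\<forall>z\<in>D2.
       Max ((\<lambda>(j1, j2). cmod (pderiv2 F j1 j2 z) / (l1 z ^ j1 * l2 z ^ j2))
              ` {(j1, j2). j1 + j2 = p + 1})
       \<le> c * Max ((\<lambda>(k1, k2). cmod (pderiv2 F k1 k2 z) / (l1 z ^ k1 * l2 z ^ k2))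
              ` {(k1, k2). k1 + k2 \<le> p}))"
  then obtain p :: nat and c :: real where c: "c \<ge> 0" and hyp: "\<forall>z\<in>D2.
       Max ((\<lambda>(j1, j2). cmod (pderiv2 F j1 j2 z) / (l1 z ^ j1 * l2 z ^ j2))
              ` {(j1, j2). j1 + j2 = p + 1})
       \<le> c * Max ((\<lambda>(k1, k2). cmod (pderiv2 F k1 k2 z) / (l1 z ^ k1 * l2 z ^ k2))
              ` {(k1, k2). k1 + k2 \<le> p})" by blast
  have lpos: "l1 z > 0 \<and> l2 z > 0" if z: "z \<in> D2" for z
  proof -
    have "1 - cmod (fst z) > 0" "1 - cmod (snd z) > 0" using z by (auto simp: D2_mem)
    then show ?thesis using l1_gt z l2_gt beta by (smt (verit) divide_pos_pos)
  qed
  have sub: "z \<in> D2" if z0: "z0 \<in> D2" and z: "z \<in> polydisc z0 (\<beta> / l1 z0, \<beta> / l2 z0)" for z0 z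
  proof -
    have a1: "1 - cmod (fst z0) > 0" and a2: "1 - cmod (snd z0) > 0" using z0 by (auto simp: D2_mem)
    have "\<beta> / (1 - cmod (fst z0)) < l1 z0" using l1_gt z0 by auto
    then have "\<beta> < l1 z0 * (1 - cmod (fst z0))" using a1 by (simp add: field_simps)
    then have b1: "\<beta> / l1 z0 < 1 - cmod (fst z0)" using lpos[OF z0] by (simp add: field_simps)
    have "\<beta> / (1 - cmod (snd z0)) < l2 z0" using l2_gt z0 by auto
    then have "\<beta> < l2 z0 * (1 - cmod (snd z0))" using a2 by (simp add: field_simps)
    then have b2: "\<beta> / l2 z0 < 1 - cmod (snd z0)" using lpos[OF z0] by (simp add: field_simps)
    have "cmod (fst z) \<le> cmod (fst z0) + cmod (fst z - fst z0)"
      using norm_triangle_sub[of "fst z" "fst z0"] by simp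
    moreover have "cmod (snd z) \<le> cmod (snd z0) + cmod (snd z - snd z0)"
      using norm_triangle_sub[of "snd z" "snd z0"] by simp
    ultimately show ?thesis using z b1 b2 by (auto simp: polydisc_mem D2_mem)
  qed
  from LQ have q: "\<forall>lj\<in>{l1, l2}. 0 < lambda1 l1 l2 lj (\<beta>, \<beta>) \<and>
                       lambda1 l1 l2 lj (\<beta>, \<beta>) \<le> lambda2 l1 l2 lj (\<beta>, \<beta>) \<and>
                       lambda2 l1 l2 lj (\<beta>, \<beta>) < \<infinity>"
    unfolding Q2_def using beta by auto
  obtain x1 x2 where x: "0 < x1" "\<forall>z0\<in>D2. \<forall>z\<in>D2 \<inter> polydisc z0 (\<beta> / l1 z0, \<beta> / l2 z0).
            x1 \<le> l1 z / l1 z0 \<and> l1 z / l1 z0 \<le> x2"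
    using lam_extract[of l1 l2 l1 "(\<beta>, \<beta>)"] q by auto
  obtain y1 y2 where y: "0 < y1" "\<forall>z0\<in>D2. \<forall>z\<in>D2 \<inter> polydisc z0 (\<beta> / l1 z0, \<beta> / l2 z0).
            y1 \<le> l2 z / l2 z0 \<and> l2 z / l2 z0 \<le> y2"
    using lam_extract[of l1 l2 l2 "(\<beta>, \<beta>)"] q by auto
  define L1 where "L1 = min 1 (min x1 y1)"
  define L2 where "L2 = max 1 (max x2 y2)"
  have lam: "L1 * l1 z0 \<le> l1 z \<and> l1 z \<le> L2 * l1 z0 \<and> L1 * l2 z0 \<le> l2 z \<and> l2 z \<le> L2 * l2 z0"
    if z0: "z0 \<in> D2" and z: "z \<in> polydisc z0 (\<beta> / l1 z0, \<beta> / l2 z0)" for z0 z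
  proof -
    have zz: "z \<in> D2 \<inter> polydisc z0 (\<beta> / l1 z0, \<beta> / l2 z0)" using sub[OF z0 z] z by simp
    have p1: "l1 z0 > 0" and p2: "l2 z0 > 0" using lpos[OF z0] by auto
    have r1: "x1 \<le> l1 z / l1 z0" "l1 z / l1 z0 \<le> x2" using x(2) z0 zz by auto
    have r2: "y1 \<le> l2 z / l2 z0" "l2 z / l2 z0 \<le> y2" using y(2) z0 zz by auto
    have "L1 \<le> l1 z / l1 z0" "l1 z / l1 z0 \<le> L2" "L1 \<le> l2 z / l2 z0" "l2 z / l2 z0 \<le> L2"
      using r1 r2 by (auto simp: L1_def L2_def)
    then show ?thesis using p1 p2 by (simp add: field_simps)
  qed
  have sh: "sep_holo F" by (rule an_sep[OF F_an])
  interpret C: conv F l1 l2 \<beta> c L1 L2 p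
  proof (unfold_locales)
    show "0 < L1" using x(1) y(1) by (simp add: L1_def)
  qed (use sh[unfolded sep_holo_def] beta lpos sub c hyp lam in \<open>auto simp: L1_def L2_def\<close>)
  show "bounded_L_index l1 l2 F" by (rule C.bounded)
qed

end
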